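(* Let $M$ be a real $n\times n$ matrix, $n\ge2$. If both $M$ and $M^{[2]}$ are $P_0$-matrices, then $M$ is positive semistable. If both $M$ and $M^{[2]}$ are $P$-matrices, then $M$ is positive stable.
   Context: A square real matrix is a $P$-matrix (resp. $P_0$-matrix) if all its principal minors are positive (resp. nonnegative). It is positive stable (resp. positive semistable) if all its eigenvalues have positive (resp. nonnegative) real part. For $M\in\mathbb{R}^{n\times n}$, $M^{[2]}$ is the second additive compound: the matrix of $u\wedge v\mapsto Mu\wedge v+u\wedge Mv$ on $\Lambda^2\mathbb{R}^n$ with respect to the lexicographically ordered basis $e_i\wedge e_j$ ($i<j$). *)

theory Defs
  imports "Jordan_Normal_Form.Char_Poly" "Jordan_Normal_Form.DL_Submatrix"
begin

definition P_matrix :: "real mat \<Rightarrow> bool" where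
  "P_matrix A \<longleftrightarrow> (\<forall>I. I \<subseteq> {0..<dim_row A} \<and> I \<noteq> {} \<longrightarrow> det (submatrix A I I) > 0)"

definition P0_matrix :: "real mat \<Rightarrow> bool" where
  "P0_matrix A \<longleftrightarrow> (\<forall>I. I \<subseteq> {0..<dim_row A} \<and> I \<noteq> {} \<longrightarrow> det (submatrix A I I) \<ge> 0)"

definition positive_stable :: "real mat \<Rightarrow> bool" where
  "positive_stable A \<longleftrightarrow> (\<forall>c. eigenvalue (map_mat complex_of_real A) c \<longrightarrow> Re c > 0)"

definition positive_semistable :: "real mat \<Rightarrow> bool" where
  "positive_semistable A \<longleftrightarrow> (\<forall>c. eigenvalue (map_mat complex_of_real A) c \<longrightarrow> Re c \<ge> 0)"

text \<open>Lexicographically ordered index pairs (i,j), i<j, for the basis e_i \<and> e_j.\<close>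

definition wedge_pairs :: "nat \<Rightarrow> (nat \<times> nat) list" where
  "wedge_pairs n = concat (map (\<lambda>i. map (\<lambda>j. (i, j)) [Suc i..<n]) [0..<n])"

text \<open>Coefficient of e_i \<and> e_j in M e_k \<and> e_l + e_k \<and> M e_l (i<j, k<l).\<close>

definition compound2_entry :: "real mat \<Rightarrow> nat \<times> nat \<Rightarrow> nat \<times> nat \<Rightarrow> real" where
  "compound2_entry M ij kl = (case ij of (i, j) \<Rightarrow> case kl of (k, l) \<Rightarrow>
      (if l = j then M $$ (i, k) else 0) - (if l = i then M $$ (j, k) else 0)
    + (if k = i then M $$ (j, l) else 0) - (if k = j then M $$ (i, l) else 0))"

definition second_additive_compound :: "real mat \<Rightarrow> real mat" where
  "second_additive_compound M =
     (let ps = wedge_pairs (dim_row M) in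
      mat (length ps) (length ps) (\<lambda>(a, b). compound2_entry M (ps ! a) (ps ! b)))"

end

theory Submission
  imports Defs
begin



lemma det_add_at:
  fixes C :: "real mat"
  assumes C: "C \<in> carrier_mat q q" and j: "j < q"
  shows "det (mat q q (\<lambda>(r,s). C$$(r,s) + (if r = j \<and> s = j then t else 0)))
       = det C + t * det (mat_delete C j j)"
proof -
  let ?C = "mat q q (\<lambda>(r,s). C$$(r,s) + (if r = j \<and> s = j then t else 0))"
  have C': "?C \<in> carrier_mat q q" by auto
  have del: "mat_delete ?C j s = mat_delete C j s" if "s < q" for s
    using C that by (intro eq_matI) (auto simp: mat_delete_def)
  have "det ?C = (\<Sum>s<q. ?C $$ (j,s) * cofactor ?C j s)"
    by (rule laplace_expansion_row[OF C' j])
  also have "\<dots> = (\<Sum>s<q. C$$(j,s) * cofactor C j s + (if s = j then t * cofactor C j j else 0))"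
    by (rule sum.cong) (use j in \<open>auto simp: cofactor_def del algebra_simps\<close>)
  also have "\<dots> = det C + t * cofactor C j j"
    using j by (simp add: sum.distrib laplace_expansion_row[OF C j])
  also have "cofactor C j j = det (mat_delete C j j)"
    by (simp add: cofactor_def)
  finally show ?thesis .
qed

lemma pick_delete:
  assumes fin: "finite I" and k: "k \<in> I" and r: "r < card I - 1"
  shows "pick (I - {k}) r = pick I (if r < card {a\<in>I. a<k} then r else Suc r)"
proof -
  define j where "j = card {a\<in>I. a<k}"
  define r' where "r' = (if r < j then r else Suc r)"
  have r'lt: "r' < card I" using r unfolding r'_def by auto
  define x where "x = pick I r'"
  have xI: "x \<in> I" unfolding x_def using pick_in_set r'lt by auto
  have cx: "card {a\<in>I. a<x} = r'" unfolding x_def using card_pick r'lt by auto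
  have xk: "x \<noteq> k" using cx unfolding j_def r'_def by (auto split: if_splits)
  have c2: "card {a\<in>I-{k}. a<x} = r"
  proof (cases "r < j")
    case True
    hence "r' = r" unfolding r'_def by auto
    have "x < k"
    proof (rule ccontr)
      assume "\<not> x < k"
      hence "k < x" using xk by auto
      hence "{a\<in>I. a<k} \<subset> {a\<in>I. a<x}" using k by auto
      hence "j < r'" unfolding j_def using cx fin by (metis (no_types, lifting) finite_subset mem_Collect_eq psubset_card_mono subsetI)
      thus False using True \<open>r' = r\<close> by auto
    qed
    hence "{a\<in>I-{k}. a<x} = {a\<in>I. a<x}" by auto
    thus ?thesis using cx \<open>r' = r\<close> by simp
  next
    case False
    hence "r' = Suc r" unfolding r'_def by auto
    have "k < x"
    proof (rule ccontr)
      assume "\<not> k < x"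
      hence "x < k" using xk by auto
      hence "{a\<in>I. a<x} \<subseteq> {a\<in>I. a<k}" by auto
      hence "r' \<le> j" unfolding j_def using cx fin by (metis (no_types, lifting) card_mono finite_subset mem_Collect_eq subsetI)
      thus False using False \<open>r' = Suc r\<close> by auto
    qed
    hence "{a\<in>I-{k}. a<x} = {a\<in>I. a<x} - {k}" by auto
    moreover have "k \<in> {a\<in>I. a<x}" using k \<open>k<x\<close> by auto
    ultimately have "card {a\<in>I-{k}. a<x} = card {a\<in>I. a<x} - 1" using fin by simp
    thus ?thesis using cx \<open>r' = Suc r\<close> by simp
  qed
  have "pick (I-{k}) r = x" using pick_card_in_set[of x "I-{k}"] c2 xI xk by auto
  thus ?thesis unfolding x_def r'_def j_def .
qed

lemma sub_eq:
  assumes "B \<in> carrier_mat m m" "I \<subseteq> {0..<m}"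
  shows "submatrix B I I = mat (card I) (card I) (\<lambda>(r,s). B$$(pick I r, pick I s))"
proof -
  have "{i. i < m \<and> i \<in> I} = I" using assms by auto
  thus ?thesis using assms unfolding submatrix_def by simp
qed

lemma pick_upto: "r < m \<Longrightarrow> pick {0..<m} r = r"
proof -
  assume "r < m"
  have "card {a\<in>{0..<m}. a<r} = r"
  proof -
    have "{a\<in>{0..<m}. a<r} = {0..<r}" using \<open>r<m\<close> by auto
    thus ?thesis by simp
  qed
  thus ?thesis using pick_card_in_set[of r "{0..<m}"] \<open>r<m\<close> by simp
qed

lemma sub_full:
  assumes "B \<in> carrier_mat m m"
  shows "submatrix B {0..<m} {0..<m} = B"
  using assms by (intro eq_matI) (auto simp: sub_eq pick_upto)

lemma det_empty: "det (mat 0 0 f) = (1::real)"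
proof -
  have "mat 0 0 f = (1\<^sub>m 0 :: real mat)" by (intro eq_matI) auto
  thus ?thesis by simp
qed

definition addS :: "real mat \<Rightarrow> real \<Rightarrow> nat set \<Rightarrow> real mat" where
  "addS A t S = mat (dim_row A) (dim_col A) (\<lambda>(i,j). A$$(i,j) + (if i = j \<and> i \<in> S then t else 0))"

lemma addS_carrier: "A \<in> carrier_mat m m \<Longrightarrow> addS A t S \<in> carrier_mat m m"
  unfolding addS_def by auto




lemma main_ind:
  assumes A: "A \<in> carrier_mat m m" and P0: "P0_matrix A" and t: "t \<ge> 0"
    and S: "finite S" "S \<subseteq> {0..<m}"
  shows "\<forall>I. I \<subseteq> {0..<m} \<longrightarrow> det (submatrix (addS A t S) I I) \<ge> (if I \<subseteq> S then t ^ card I else 0)"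
  using S
proof (induction S rule: finite_induct)
  case empty
  have eq: "addS A t {} = A" using A by (intro eq_matI) (auto simp: addS_def)
  show ?case
  proof (intro allI impI)
    fix I assume I: "I \<subseteq> {0..<m}"
    show "det (submatrix (addS A t {}) I I) \<ge> (if I \<subseteq> {} then t ^ card I else 0)"
    proof (cases "I = {}")
      case True
      thus ?thesis using sub_eq[OF A I] by (simp add: eq det_empty)
    next
      case False
      thus ?thesis using P0 I A unfolding eq P0_matrix_def by auto
    qed
  qed
next
  case (insert k S)
  have k: "k < m" and Sm: "S \<subseteq> {0..<m}" using insert.prems by auto
  note IH = insert.IH[OF Sm]
  let ?B = "addS A t S" and ?B' = "addS A t (insert k S)"
  have B: "?B \<in> carrier_mat m m" and B': "?B' \<in> carrier_mat m m" using A by (auto simp: addS_carrier)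
  show ?case
  proof (intro allI impI)
    fix I assume I: "I \<subseteq> {0..<m}"
    have fin: "finite I" using I finite_subset by blast
    show "det (submatrix ?B' I I) \<ge> (if I \<subseteq> insert k S then t ^ card I else 0)"
    proof (cases "k \<in> I")
      case False
      have pI: "pick I r \<in> I" if "r < card I" for r using pick_in_set that by auto
      have "submatrix ?B' I I = submatrix ?B I I"
        unfolding sub_eq[OF B I] sub_eq[OF B' I]
      proof (intro eq_matI)
        fix r s assume "r < dim_row (mat (card I) (card I) (\<lambda>(r,s). ?B$$(pick I r, pick I s)))"
          "s < dim_col (mat (card I) (card I) (\<lambda>(r,s). ?B$$(pick I r, pick I s)))"
        hence rs: "r < card I" "s < card I" by auto
        have "pick I r \<noteq> k" using pI[OF rs(1)] False by auto
        moreover have "pick I r < m" "pick I s < m" using pI[OF rs(1)] pI[OF rs(2)] I by auto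
        ultimately show "mat (card I) (card I) (\<lambda>(r,s). ?B'$$(pick I r, pick I s)) $$ (r,s)
           = mat (card I) (card I) (\<lambda>(r,s). ?B$$(pick I r, pick I s)) $$ (r,s)"
          using rs A by (simp add: addS_def)
      qed auto
      moreover have "(I \<subseteq> insert k S) = (I \<subseteq> S)" using False by auto
      ultimately show ?thesis using IH I by simp
    next
      case True
      define q where "q = card I"
      define j where "j = card {a\<in>I. a<k}"
      have jq: "j < q" unfolding j_def q_def
        using True fin by (intro psubset_card_mono) auto
      have pI: "pick I r \<in> I" if "r < q" for r using pick_in_set that unfolding q_def by auto
      have pinj: "pick I r = pick I s \<longleftrightarrow> r = s" if "r < q" "s < q" for r s
        using pick_mono[of s I r] pick_mono[of r I s] that unfolding q_def
        by (metis nat_neq_iff order_less_irrefl)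
      have pk: "pick I r = k \<longleftrightarrow> r = j" if "r < q" for r
      proof
        assume "pick I r = k"
        thus "r = j" using card_pick[of r I] that unfolding j_def q_def by auto
      next
        assume "r = j"
        thus "pick I r = k" using pick_card_in_set[OF True] unfolding j_def by auto
      qed
      define C where "C = submatrix ?B I I"
      have Cc: "C \<in> carrier_mat q q" unfolding C_def sub_eq[OF B I] q_def by auto
      have "submatrix ?B' I I = mat q q (\<lambda>(r,s). C$$(r,s) + (if r = j \<and> s = j then t else 0))"
        unfolding sub_eq[OF B' I] C_def sub_eq[OF B I] q_def[symmetric]
      proof (intro eq_matI)
        fix r s assume "r < dim_row (mat q q (\<lambda>(r, s). mat q q (\<lambda>(r, s). ?B $$ (pick I r, pick I s)) $$ (r, s) + (if r = j \<and> s = j then t else 0)))"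
          "s < dim_col (mat q q (\<lambda>(r, s). mat q q (\<lambda>(r, s). ?B $$ (pick I r, pick I s)) $$ (r, s) + (if r = j \<and> s = j then t else 0)))"
        hence rs: "r < q" "s < q" by auto
        have "pick I r < m" "pick I s < m" using pI[OF rs(1)] pI[OF rs(2)] I by auto
        thus "mat q q (\<lambda>(r,s). ?B'$$(pick I r, pick I s)) $$ (r,s) =
          mat q q (\<lambda>(r, s). mat q q (\<lambda>(r, s). ?B $$ (pick I r, pick I s)) $$ (r, s) + (if r = j \<and> s = j then t else 0)) $$ (r,s)"
          using rs A pinj[OF rs] pk[OF rs(1)] insert.hyps by (auto simp: addS_def)
      qed auto
      hence d1: "det (submatrix ?B' I I) = det C + t * det (mat_delete C j j)"
        using det_add_at[OF Cc jq] by simp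
      have Ik: "I - {k} \<subseteq> {0..<m}" using I by auto
      have "mat_delete C j j = submatrix ?B (I - {k}) (I - {k})"
        unfolding C_def sub_eq[OF B I] sub_eq[OF B Ik]
      proof (intro eq_matI)
        show "dim_row (mat_delete (mat (card I) (card I) (\<lambda>(r, s). ?B $$ (pick I r, pick I s))) j j) =
          dim_row (mat (card (I - {k})) (card (I - {k})) (\<lambda>(r, s). ?B $$ (pick (I - {k}) r, pick (I - {k}) s)))"
          using True fin by simp
        show "dim_col (mat_delete (mat (card I) (card I) (\<lambda>(r, s). ?B $$ (pick I r, pick I s))) j j) =
          dim_col (mat (card (I - {k})) (card (I - {k})) (\<lambda>(r, s). ?B $$ (pick (I - {k}) r, pick (I - {k}) s)))"
          using True fin by simp
        fix r s assume "r < dim_row (mat (card (I - {k})) (card (I - {k})) (\<lambda>(r, s). ?B $$ (pick (I - {k}) r, pick (I - {k}) s)))"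
          "s < dim_col (mat (card (I - {k})) (card (I - {k})) (\<lambda>(r, s). ?B $$ (pick (I - {k}) r, pick (I - {k}) s)))"
        hence rs: "r < card I - 1" "s < card I - 1" using True fin by auto
        show "mat_delete (mat (card I) (card I) (\<lambda>(r, s). ?B $$ (pick I r, pick I s))) j j $$ (r, s) =
          mat (card (I - {k})) (card (I - {k})) (\<lambda>(r, s). ?B $$ (pick (I - {k}) r, pick (I - {k}) s)) $$ (r, s)"
          using rs True fin pick_delete[OF fin True rs(1)] pick_delete[OF fin True rs(2)]
          unfolding j_def by (auto simp: mat_delete_def)
      qed
      hence d2: "det (mat_delete C j j) \<ge> (if I - {k} \<subseteq> S then t ^ card (I - {k}) else 0)"
        using IH Ik by simp
      have d3: "det C \<ge> 0" using IH I t unfolding C_def by (smt (verit) zero_le_power)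
      have cI: "card I = Suc (card (I - {k}))" using True fin
        by (metis card_Suc_Diff1)
      show ?thesis
      proof (cases "I \<subseteq> insert k S")
        case True
        hence "I - {k} \<subseteq> S" by auto
        hence "det (mat_delete C j j) \<ge> t ^ card (I - {k})" using d2 by simp
        hence "t * det (mat_delete C j j) \<ge> t * t ^ card (I - {k})" using t by (simp add: mult_left_mono)
        thus ?thesis using True d1 d3 cI by simp
      next
        case False
        have "det (mat_delete C j j) \<ge> 0" using d2 t by (smt (verit) zero_le_power)
        thus ?thesis using False d1 d3 t by simp
      qed
    qed
  qed
qed




lemma mv_sum: "A \<in> carrier_mat m m \<Longrightarrow> u \<in> carrier_vec m \<Longrightarrow> i < m \<Longrightarrow>
   (A *\<^sub>v u) $ i = (\<Sum>k<m. A$$(i,k) * u$k)"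
  by (auto simp: scalar_prod_def lessThan_atLeast0 intro!: sum.cong)

lemma det_shift_pos:
  assumes A: "A \<in> carrier_mat m m" and P0: "P0_matrix A" and t: "t > 0"
  shows "det (addS A t {0..<m}) > 0"
proof -
  have X: "addS A t {0..<m} \<in> carrier_mat m m" using A by (rule addS_carrier)
  have "det (submatrix (addS A t {0..<m}) {0..<m} {0..<m}) \<ge> t ^ m"
    using main_ind[OF A P0 _ _ order_refl, of t] t by auto
  thus ?thesis using sub_full[OF X] t by (smt (verit) zero_less_power)
qed

lemma eig_nonneg:
  assumes A: "A \<in> carrier_mat m m" and P0: "P0_matrix A"
    and u: "u \<in> carrier_vec m" "u \<noteq> 0\<^sub>v m" and eq: "A *\<^sub>v u = \<mu> \<cdot>\<^sub>v u"
  shows "\<mu> \<ge> 0"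
proof (rule ccontr)
  assume "\<not> \<mu> \<ge> 0"
  define t where "t = - \<mu>"
  have t: "t > 0" using \<open>\<not> \<mu> \<ge> 0\<close> unfolding t_def by auto
  have X: "addS A t {0..<m} \<in> carrier_mat m m" using A by (rule addS_carrier)
  have "addS A t {0..<m} *\<^sub>v u = 0\<^sub>v m"
  proof (rule eq_vecI)
    fix i assume "i < dim_vec (0\<^sub>v m :: real vec)"
    hence i: "i < m" by simp
    have "(addS A t {0..<m} *\<^sub>v u) $ i = (\<Sum>k<m. A$$(i,k) * u$k + (if k = i then t * u$i else 0))"
      unfolding mv_sum[OF X u(1) i] using A i
      by (intro sum.cong) (auto simp: addS_def algebra_simps)
    also have "\<dots> = (A *\<^sub>v u) $ i + t * u $ i"
      using i by (simp add: sum.distrib mv_sum[OF A u(1) i])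
    also have "\<dots> = 0" using eq i u(1) unfolding t_def by simp
    finally show "(addS A t {0..<m} *\<^sub>v u) $ i = 0\<^sub>v m $ i" using i by simp
  qed (use X in auto)
  hence "det (addS A t {0..<m}) = 0" using det_0_iff_vec_prod_zero[OF X] u by auto
  thus False using det_shift_pos[OF A P0 t] by simp
qed

lemma eig_pos:
  assumes A: "A \<in> carrier_mat m m" and P: "P_matrix A"
    and u: "u \<in> carrier_vec m" "u \<noteq> 0\<^sub>v m" and eq: "A *\<^sub>v u = \<mu> \<cdot>\<^sub>v u"
  shows "\<mu> > 0"
proof -
  have P0: "P0_matrix A" using P unfolding P_matrix_def P0_matrix_def by (auto simp: less_imp_le)
  have ge: "\<mu> \<ge> 0" by (rule eig_nonneg[OF A P0 u eq])
  have "\<mu> \<noteq> 0"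
  proof
    assume "\<mu> = 0"
    hence "A *\<^sub>v u = 0\<^sub>v m" using eq u(1) by auto
    hence d: "det A = 0" using det_0_iff_vec_prod_zero[OF A] u by auto
    have "m \<noteq> 0"
    proof
      assume "m = 0" thus False using u by (auto intro!: eq_vecI)
    qed
    hence "det (submatrix A {0..<m} {0..<m}) > 0" using P A unfolding P_matrix_def by auto
    thus False using d sub_full[OF A] by simp
  qed
  thus ?thesis using ge by simp
qed




lemma wp_mem: "i < j \<Longrightarrow> j < n \<Longrightarrow> (i,j) \<in> set (wedge_pairs n)"
  unfolding wedge_pairs_def by (auto intro!: bexI[of _ i])

lemma wp_len_mem: "q < length (wedge_pairs n) \<Longrightarrow> fst (wedge_pairs n ! q) < snd (wedge_pairs n ! q) \<and> snd (wedge_pairs n ! q) < n"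
proof -
  assume "q < length (wedge_pairs n)"
  hence "wedge_pairs n ! q \<in> set (wedge_pairs n)" by simp
  moreover have "\<forall>z\<in>set (wedge_pairs n). fst z < snd z \<and> snd z < n"
    unfolding wedge_pairs_def by auto
  ultimately show ?thesis by blast
qed

lemma sl_concat: "sum_list (map (f::_\<Rightarrow>real) (concat xss)) = sum_list (map (\<lambda>xs. sum_list (map f xs)) xss)"
  by (induct xss) auto

lemma sum_wp: "(\<Sum>q<length (wedge_pairs n). f (wedge_pairs n ! q) :: real) = (\<Sum>i<n. \<Sum>j\<in>{i<..<n}. f (i,j))"
proof -
  have "(\<Sum>q<length (wedge_pairs n). f (wedge_pairs n ! q)) = sum_list (map f (wedge_pairs n))"
    by (simp add: sum_list_sum_nth lessThan_atLeast0)
  also have "\<dots> = (\<Sum>i\<leftarrow>[0..<n]. \<Sum>j\<leftarrow>[Suc i..<n]. f (i,j))"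
    unfolding wedge_pairs_def by (simp add: sl_concat comp_def)
  also have "\<dots> = (\<Sum>i<n. \<Sum>j\<in>{i<..<n}. f (i,j))"
    by (simp add: interv_sum_list_conv_sum_set_nat lessThan_atLeast0 atLeastSucLessThan_greaterThanLessThan)
  finally show ?thesis .
qed



lemma ifs: "(\<Sum>l\<in>S. if P then f l else 0) = (if P then sum f S else (0::real))" by auto

lemma central:
  fixes M :: "real mat" and x y :: "nat \<Rightarrow> real"
  assumes ij: "i < j" "j < n"
    and hx: "\<And>i. i < n \<Longrightarrow> (\<Sum>k<n. M$$(i,k) * x k) = a * x i - b * y i"
    and hy: "\<And>i. i < n \<Longrightarrow> (\<Sum>k<n. M$$(i,k) * y k) = b * x i + a * y i"
  defines "w \<equiv> \<lambda>(k,l). x k * y l - x l * y k"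
  shows "(\<Sum>k<n. \<Sum>l\<in>{k<..<n}. compound2_entry M (i,j) (k,l) * w (k,l)) = 2 * a * w (i,j)"
proof -
  have split: "compound2_entry M (i,j) (k,l) * w (k,l) =
     (if l = j then M$$(i,k) * w (k,l) else 0) - (if l = i then M$$(j,k) * w (k,l) else 0)
     + (if k = i then M$$(j,l) * w (k,l) else 0) - (if k = j then M$$(i,l) * w (k,l) else 0)" for k l
    unfolding compound2_entry_def by (simp add: algebra_simps)
  have step2: "(\<Sum>l\<in>{k<..<n}. compound2_entry M (i,j) (k,l) * w (k,l)) =
      (if k < j then M$$(i,k) * w (k,j) else 0) - (if k < i then M$$(j,k) * w (k,i) else 0)
      + (if k = i then (\<Sum>l\<in>{i<..<n}. M$$(j,l) * w (i,l)) else 0)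
      - (if k = j then (\<Sum>l\<in>{j<..<n}. M$$(i,l) * w (j,l)) else 0)" if k: "k < n" for k
  proof -
    have "(\<Sum>l\<in>{k<..<n}. compound2_entry M (i,j) (k,l) * w (k,l)) =
       (\<Sum>l\<in>{k<..<n}. (if l = j then M$$(i,k) * w (k,l) else 0))
       - (\<Sum>l\<in>{k<..<n}. (if l = i then M$$(j,k) * w (k,l) else 0))
       + (\<Sum>l\<in>{k<..<n}. (if k = i then M$$(j,l) * w (k,l) else 0))
       - (\<Sum>l\<in>{k<..<n}. (if k = j then M$$(i,l) * w (k,l) else 0))"
      unfolding split by (simp only: sum.distrib sum_subtractf)
    also have "(\<Sum>l\<in>{k<..<n}. (if l = j then M$$(i,k) * w (k,l) else 0)) = (if k < j then M$$(i,k) * w (k,j) else 0)"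
      using ij by (subst sum.delta) auto
    also have "(\<Sum>l\<in>{k<..<n}. (if l = i then M$$(j,k) * w (k,l) else 0)) = (if k < i then M$$(j,k) * w (k,i) else 0)"
      using ij by (subst sum.delta) auto
    also have "(\<Sum>l\<in>{k<..<n}. (if k = i then M$$(j,l) * w (k,l) else 0)) = (if k = i then (\<Sum>l\<in>{i<..<n}. M$$(j,l) * w (i,l)) else 0)"
      by (subst ifs) auto
    also have "(\<Sum>l\<in>{k<..<n}. (if k = j then M$$(i,l) * w (k,l) else 0)) = (if k = j then (\<Sum>l\<in>{j<..<n}. M$$(i,l) * w (j,l)) else 0)"
      by (subst ifs) auto
    finally show ?thesis .
  qed
  have "(\<Sum>k<n. \<Sum>l\<in>{k<..<n}. compound2_entry M (i,j) (k,l) * w (k,l)) =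
     (\<Sum>k<n. (if k < j then M$$(i,k) * w (k,j) else 0) - (if k < i then M$$(j,k) * w (k,i) else 0)
      + (if k = i then (\<Sum>l\<in>{i<..<n}. M$$(j,l) * w (i,l)) else 0)
      - (if k = j then (\<Sum>l\<in>{j<..<n}. M$$(i,l) * w (j,l)) else 0))"
    by (rule sum.cong[OF refl]) (simp add: step2)
  also have "\<dots> = (\<Sum>k<n. (if k < j then M$$(i,k) * w (k,j) else 0)) - (\<Sum>k<n. (if k < i then M$$(j,k) * w (k,i) else 0))
      + (\<Sum>k<n. (if k = i then (\<Sum>l\<in>{i<..<n}. M$$(j,l) * w (i,l)) else 0))
      - (\<Sum>k<n. (if k = j then (\<Sum>l\<in>{j<..<n}. M$$(i,l) * w (j,l)) else 0))"
    by (simp only: sum.distrib sum_subtractf)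
  also have "(\<Sum>k<n. (if k = i then (\<Sum>l\<in>{i<..<n}. M$$(j,l) * w (i,l)) else 0)) = (\<Sum>l\<in>{i<..<n}. M$$(j,l) * w (i,l))"
    using ij by (subst sum.delta) auto
  also have "(\<Sum>k<n. (if k = j then (\<Sum>l\<in>{j<..<n}. M$$(i,l) * w (j,l)) else 0)) = (\<Sum>l\<in>{j<..<n}. M$$(i,l) * w (j,l))"
    using ij by (subst sum.delta) auto
  also have "(\<Sum>l\<in>{i<..<n}. M$$(j,l) * w (i,l)) = (\<Sum>l<n. if i < l then M$$(j,l) * w (i,l) else 0)"
  proof -
    have "{i<..<n} = {l\<in>{..<n}. i < l}" by auto
    thus ?thesis by (simp only: sum.inter_filter[OF finite_lessThan])
  qed
  also have "(\<Sum>l\<in>{j<..<n}. M$$(i,l) * w (j,l)) = (\<Sum>l<n. if j < l then M$$(i,l) * w (j,l) else 0)"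
  proof -
    have "{j<..<n} = {l\<in>{..<n}. j < l}" by auto
    thus ?thesis by (simp only: sum.inter_filter[OF finite_lessThan])
  qed
  also have "(\<Sum>k<n. (if k < j then M$$(i,k) * w (k,j) else 0)) - (\<Sum>k<n. (if k < i then M$$(j,k) * w (k,i) else 0))
      + (\<Sum>l<n. if i < l then M$$(j,l) * w (i,l) else 0) - (\<Sum>l<n. if j < l then M$$(i,l) * w (j,l) else 0)
      = (\<Sum>k<n. ((if k < j then M$$(i,k) * w (k,j) else 0) - (if j < k then M$$(i,k) * w (j,k) else 0))
          + ((if i < k then M$$(j,k) * w (i,k) else 0) - (if k < i then M$$(j,k) * w (k,i) else 0)))"
    by (simp only: sum.distrib sum_subtractf)
  also have "\<dots> = (\<Sum>k<n. (M$$(i,k) * x k * y j - x j * (M$$(i,k) * y k))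
                     + (x i * (M$$(j,k) * y k) - M$$(j,k) * x k * y i))"
  proof (rule sum.cong[OF refl])
    fix k
    show "((if k < j then M$$(i,k) * w (k,j) else 0) - (if j < k then M$$(i,k) * w (j,k) else 0))
          + ((if i < k then M$$(j,k) * w (i,k) else 0) - (if k < i then M$$(j,k) * w (k,i) else 0))
        = (M$$(i,k) * x k * y j - x j * (M$$(i,k) * y k)) + (x i * (M$$(j,k) * y k) - M$$(j,k) * x k * y i)"
    proof -
      have e1: "(if k < j then M$$(i,k) * w (k,j) else 0) - (if j < k then M$$(i,k) * w (j,k) else 0) = M$$(i,k) * w (k,j)"
        unfolding w_def by (cases "k < j"; cases "j < k") (auto simp: algebra_simps)
      have e2: "(if i < k then M$$(j,k) * w (i,k) else 0) - (if k < i then M$$(j,k) * w (k,i) else 0) = M$$(j,k) * w (i,k)"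
        unfolding w_def by (cases "i < k"; cases "k < i") (auto simp: algebra_simps)
      show ?thesis unfolding e1 e2 unfolding w_def by (simp add: algebra_simps)
    qed
  qed
  also have "\<dots> = (\<Sum>k<n. M$$(i,k) * x k) * y j - x j * (\<Sum>k<n. M$$(i,k) * y k)
       + x i * (\<Sum>k<n. M$$(j,k) * y k) - (\<Sum>k<n. M$$(j,k) * x k) * y i"
    by (simp only: sum.distrib sum_subtractf sum_distrib_left sum_distrib_right)
  also have "\<dots> = 2 * a * w (i,j)"
  proof -
    have "i < n" using ij by simp
    show ?thesis
      by (simp only: hx[OF \<open>i<n\<close>] hx[OF \<open>j<n\<close>] hy[OF \<open>i<n\<close>] hy[OF \<open>j<n\<close>]) (simp add: w_def algebra_simps)
  qed
  finally show ?thesis .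
qed




lemma M2_carrier: "M \<in> carrier_mat n n \<Longrightarrow>
   second_additive_compound M \<in> carrier_mat (length (wedge_pairs n)) (length (wedge_pairs n))"
  unfolding second_additive_compound_def Let_def by auto

lemma compound_eig:
  fixes M :: "real mat" and x y :: "nat \<Rightarrow> real"
  assumes M: "M \<in> carrier_mat n n"
    and hx: "\<And>i. i < n \<Longrightarrow> (\<Sum>k<n. M$$(i,k) * x k) = a * x i - b * y i"
    and hy: "\<And>i. i < n \<Longrightarrow> (\<Sum>k<n. M$$(i,k) * y k) = b * x i + a * y i"
  shows "second_additive_compound M *\<^sub>v vec (length (wedge_pairs n)) (\<lambda>q. (\<lambda>(k,l). x k * y l - x l * y k) (wedge_pairs n ! q))
     = (2 * a) \<cdot>\<^sub>v vec (length (wedge_pairs n)) (\<lambda>q. (\<lambda>(k,l). x k * y l - x l * y k) (wedge_pairs n ! q))"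
    (is "?M2 *\<^sub>v ?u = _")
proof -
  let ?ps = "wedge_pairs n" and ?L = "length (wedge_pairs n)"
  let ?w = "\<lambda>(k,l). x k * y l - x l * y k"
  have C: "?M2 \<in> carrier_mat ?L ?L" by (rule M2_carrier[OF M])
  have u: "?u \<in> carrier_vec ?L" by simp
  have ent: "?M2 $$ (p,q) = compound2_entry M (?ps ! p) (?ps ! q)" if "p < ?L" "q < ?L" for p q
    using that M unfolding second_additive_compound_def Let_def by simp
  show ?thesis
  proof (rule eq_vecI)
    fix p assume "p < dim_vec ((2 * a) \<cdot>\<^sub>v ?u)"
    hence p: "p < ?L" by simp
    obtain i j where ij: "?ps ! p = (i,j)" by fastforce
    have ijl: "i < j" "j < n" using wp_len_mem[OF p] ij by auto
    have "(?M2 *\<^sub>v ?u) $ p = (\<Sum>q<?L. ?M2 $$ (p,q) * ?u $ q)" by (rule mv_sum[OF C u p])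
    also have "\<dots> = (\<Sum>q<?L. compound2_entry M (i,j) (?ps ! q) * ?w (?ps ! q))"
      by (rule sum.cong[OF refl]) (simp add: ent p ij)
    also have "\<dots> = (\<Sum>k<n. \<Sum>l\<in>{k<..<n}. compound2_entry M (i,j) (k,l) * ?w (k,l))"
      by (rule sum_wp)
    also have "\<dots> = 2 * a * ?w (i,j)" by (rule central[OF ijl hx hy])
    also have "\<dots> = ((2 * a) \<cdot>\<^sub>v ?u) $ p" using p ij by simp
    finally show "(?M2 *\<^sub>v ?u) $ p = ((2 * a) \<cdot>\<^sub>v ?u) $ p" .
  qed (use C in simp)
qed

lemma core:
  fixes M :: "real mat"
  assumes M: "M \<in> carrier_mat n n" and ev: "eigenvalue (map_mat complex_of_real M) c"
  shows "(\<exists>u. u \<in> carrier_vec n \<and> u \<noteq> 0\<^sub>v n \<and> M *\<^sub>v u = Re c \<cdot>\<^sub>v u) \<or>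
    (\<exists>u. u \<in> carrier_vec (length (wedge_pairs n)) \<and> u \<noteq> 0\<^sub>v (length (wedge_pairs n)) \<and>
        second_additive_compound M *\<^sub>v u = (2 * Re c) \<cdot>\<^sub>v u)"
proof -
  let ?A = "map_mat complex_of_real M"
  obtain v where v: "v \<in> carrier_vec n" "v \<noteq> 0\<^sub>v n" "?A *\<^sub>v v = c \<cdot>\<^sub>v v"
    using ev M unfolding eigenvalue_def eigenvector_def by auto
  define x where "x k = Re (v $ k)" for k
  define y where "y k = Im (v $ k)" for k
  define a where "a = Re c"
  define b where "b = Im c"
  have Ac: "?A \<in> carrier_mat n n" using M by simp
  have row: "(\<Sum>k<n. complex_of_real (M$$(i,k)) * v$k) = c * v$i" if i: "i < n" for i
  proof -
    have "(?A *\<^sub>v v) $ i = (\<Sum>k<n. ?A$$(i,k) * v$k)" by (rule mv_sum[OF Ac v(1) i])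
    also have "\<dots> = (\<Sum>k<n. complex_of_real (M$$(i,k)) * v$k)"
      by (rule sum.cong[OF refl]) (use M i in auto)
    finally show ?thesis using v(3) i v(1) by simp
  qed
  have hx: "(\<Sum>k<n. M$$(i,k) * x k) = a * x i - b * y i" if i: "i < n" for i
  proof -
    have "Re (\<Sum>k<n. complex_of_real (M$$(i,k)) * v$k) = Re (c * v$i)" using row[OF i] by simp
    thus ?thesis unfolding x_def y_def a_def b_def by (simp add: Re_sum)
  qed
  have hy: "(\<Sum>k<n. M$$(i,k) * y k) = b * x i + a * y i" if i: "i < n" for i
  proof -
    have "Im (\<Sum>k<n. complex_of_real (M$$(i,k)) * v$k) = Im (c * v$i)" using row[OF i] by simp
    thus ?thesis unfolding x_def y_def a_def b_def by (simp add: Im_sum algebra_simps)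
  qed
  obtain p where p: "p < n" "v $ p \<noteq> 0"
    using v(1,2) by (metis dim_vec eq_vecI index_zero_vec(1) index_zero_vec(2) carrier_vecD)
  have xy: "x p \<noteq> 0 \<or> y p \<noteq> 0" using p(2) unfolding x_def y_def by (simp add: complex_eq_iff)
  show ?thesis
  proof (cases "b = 0")
    case True
    have eig: "M *\<^sub>v vec n z = a \<cdot>\<^sub>v vec n z" if hz: "\<And>i. i < n \<Longrightarrow> (\<Sum>k<n. M$$(i,k) * z k) = a * z i" for z
    proof (rule eq_vecI)
      fix i assume "i < dim_vec (a \<cdot>\<^sub>v vec n z)"
      hence i: "i < n" by simp
      have "(M *\<^sub>v vec n z) $ i = (\<Sum>k<n. M$$(i,k) * vec n z $ k)" by (rule mv_sum[OF M _ i]) simp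
      also have "\<dots> = (\<Sum>k<n. M$$(i,k) * z k)" by (rule sum.cong) auto
      finally show "(M *\<^sub>v vec n z) $ i = (a \<cdot>\<^sub>v vec n z) $ i" using hz[OF i] i by simp
    qed (use M in simp)
    have nz: "vec n z \<noteq> 0\<^sub>v n" if "z p \<noteq> 0" for z
    proof
      assume "vec n z = 0\<^sub>v n"
      hence "vec n z $ p = 0\<^sub>v n $ p" by simp
      thus False using that p(1) by simp
    qed
    from xy show ?thesis
    proof
      assume "x p \<noteq> 0"
      hence "vec n x \<noteq> 0\<^sub>v n" by (rule nz)
      moreover have "M *\<^sub>v vec n x = Re c \<cdot>\<^sub>v vec n x" using eig[of x] hx True unfolding a_def by auto
      moreover have "vec n x \<in> carrier_vec n" by simp
      ultimately show ?thesis by (intro disjI1 exI[of _ "vec n x"] conjI)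
    next
      assume "y p \<noteq> 0"
      hence "vec n y \<noteq> 0\<^sub>v n" by (rule nz)
      moreover have "M *\<^sub>v vec n y = Re c \<cdot>\<^sub>v vec n y" using eig[of y] hy True unfolding a_def by auto
      moreover have "vec n y \<in> carrier_vec n" by simp
      ultimately show ?thesis by (intro disjI1 exI[of _ "vec n y"] conjI)
    qed
  next
    case False
    let ?ps = "wedge_pairs n" and ?L = "length (wedge_pairs n)"
    let ?w = "\<lambda>(k,l). x k * y l - x l * y k"
    let ?u = "vec ?L (\<lambda>q. ?w (?ps ! q))"
    have "\<exists>i j. i < j \<and> j < n \<and> x i * y j - x j * y i \<noteq> 0"
    proof (rule ccontr)
      assume "\<not> ?thesis"
      hence z: "x i * y j - x j * y i = 0" if "i < j" "j < n" for i j using that by auto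
      have z2: "y p * x j - x p * y j = 0" if "j < n" for j
      proof -
        consider "p < j" | "p = j" | "j < p" by linarith
        thus ?thesis
        proof cases
          case 1 thus ?thesis using z[of p j] that by (simp add: algebra_simps)
        next
          case 2 thus ?thesis by simp
        next
          case 3 thus ?thesis using z[of j p] p(1) by (simp add: algebra_simps)
        qed
      qed
      have "(\<Sum>j<n. M$$(p,j) * (y p * x j - x p * y j)) = 0" using z2 by simp
      moreover have "(\<Sum>j<n. M$$(p,j) * (y p * x j - x p * y j))
          = y p * (\<Sum>j<n. M$$(p,j) * x j) - x p * (\<Sum>j<n. M$$(p,j) * y j)"
        by (simp add: sum_subtractf sum_distrib_left algebra_simps)
      ultimately have "y p * (a * x p - b * y p) - x p * (b * x p + a * y p) = 0"
        using hx[OF p(1)] hy[OF p(1)] by simp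
      hence "b * (x p * x p + y p * y p) = 0" by (simp add: algebra_simps)
      moreover have "x p * x p + y p * y p > 0" using xy
        by (metis add_pos_nonneg add_nonneg_pos not_real_square_gt_zero zero_le_square)
      ultimately show False using False by simp
    qed
    then obtain i j where ij: "i < j" "j < n" "x i * y j - x j * y i \<noteq> 0" by blast
    obtain q where q: "q < ?L" "?ps ! q = (i,j)" using wp_mem[OF ij(1,2)] by (metis in_set_conv_nth)
    have "?u \<noteq> 0\<^sub>v ?L"
    proof
      assume "?u = 0\<^sub>v ?L"
      hence "?u $ q = 0\<^sub>v ?L $ q" by simp
      thus False using q ij(3) by simp
    qed
    moreover have "second_additive_compound M *\<^sub>v ?u = (2 * Re c) \<cdot>\<^sub>v ?u"
      using compound_eig[OF M hx hy] unfolding a_def by simp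
    moreover have "?u \<in> carrier_vec ?L" by simp
    ultimately show ?thesis by (intro disjI2 exI[of _ ?u] conjI)
  qed
qed

theorem lemma2p5:
  fixes M :: "real mat" and n :: nat
  assumes "M \<in> carrier_mat n n" and "n \<ge> 2"
  shows "(P0_matrix M \<and> P0_matrix (second_additive_compound M) \<longrightarrow> positive_semistable M)
       \<and> (P_matrix M \<and> P_matrix (second_additive_compound M) \<longrightarrow> positive_stable M)"
proof -
  note M = assms(1)
  note C = M2_carrier[OF M]
  show ?thesis
  proof (intro conjI impI)
    assume P: "P0_matrix M \<and> P0_matrix (second_additive_compound M)"
    show "positive_semistable M" unfolding positive_semistable_def
    proof (intro allI impI)
      fix c assume "eigenvalue (map_mat complex_of_real M) c"
      from core[OF M this] show "Re c \<ge> 0"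
      proof
        assume "\<exists>u. u \<in> carrier_vec n \<and> u \<noteq> 0\<^sub>v n \<and> M *\<^sub>v u = Re c \<cdot>\<^sub>v u"
        thus ?thesis using eig_nonneg[OF M] P by blast
      next
        assume "\<exists>u. u \<in> carrier_vec (length (wedge_pairs n)) \<and> u \<noteq> 0\<^sub>v (length (wedge_pairs n)) \<and>
          second_additive_compound M *\<^sub>v u = (2 * Re c) \<cdot>\<^sub>v u"
        hence "2 * Re c \<ge> 0" using eig_nonneg[OF C] P by blast
        thus ?thesis by simp
      qed
    qed
  next
    assume P: "P_matrix M \<and> P_matrix (second_additive_compound M)"
    show "positive_stable M" unfolding positive_stable_def
    proof (intro allI impI)
      fix c assume "eigenvalue (map_mat complex_of_real M) c"
      from core[OF M this] show "Re c > 0"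
      proof
        assume "\<exists>u. u \<in> carrier_vec n \<and> u \<noteq> 0\<^sub>v n \<and> M *\<^sub>v u = Re c \<cdot>\<^sub>v u"
        thus ?thesis using eig_pos[OF M] P by blast
      next
        assume "\<exists>u. u \<in> carrier_vec (length (wedge_pairs n)) \<and> u \<noteq> 0\<^sub>v (length (wedge_pairs n)) \<and>
          second_additive_compound M *\<^sub>v u = (2 * Re c) \<cdot>\<^sub>v u"
        hence "2 * Re c > 0" using eig_pos[OF C] P by blast
        thus ?thesis by simp
      qed
    qed
  qed
qed


end
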